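(* Let $A$ be a $C^*$-algebra, $X$ a full Hilbert $A$-module, $H,K$ Hilbert spaces, $\Phi\in\mathcal{C}(X,L(H,K))$, and let $(\pi_\Phi,H_\Phi,K_\Phi,V_\Phi,W_\Phi)$ be the Stinespring construction associated to $\Phi$. If $T\oplus S\in\pi_\Phi(X)'$ is a positive element, then the map $\Phi_{T\oplus S}:X\to L(H,K)$ defined by $\Phi_{T\oplus S}(x)=W_\Phi^*\sqrt{S}\,\pi_\Phi(x)\sqrt{T}\,V_\Phi$ is completely positive.
   Context: A Hilbert $A$-module $X$ is a right $A$-module with an $A$-valued inner product $\langle\cdot,\cdot\rangle$ (conjugate linear in the first and $A$-linear in the second variable), complete in the norm $\|x\|=\|\langle x,x\rangle\|^{1/2}$; it is full if the closed two-sided ideal generated by $\{\langle x,y\rangle\}$ is $A$. $L(H,K)$ is the space of bounded operators $H\to K$. A map $\Phi:X\to L(H,K)$ is completely positive if there is a completely positive map $\varphi:A\to L(H)$ with $\Phi(x)^*\Phi(y)=\varphi(\langle x,y\rangle)$ for all $x,y\in X$; $\mathcal{C}(X,L(H,K))$ is the set of such maps. $[Y]$ denotes closed linear span and $p_M$ orthogonal projection onto $M$. A representation of $X$ on Hilbert spaces $H',K'$ is a map $\pi:X\to L(H',K')$ for which there is a $*$-representation $\pi_A$ of $A$ on $H'$ with $\pi(x)^*\pi(y)=\pi_A(\langle x,y\rangle)$. The Stinespring construction associated to $\Phi$ (with associated $\varphi$) is the quintuple $(\pi_\Phi,H_\Phi,K_\Phi,V_\Phi,W_\Phi)$ where: $\pi_\varphi$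 is a $*$-representation of $A$ on $H_\Phi$, $V_\Phi\in L(H,H_\Phi)$, $\varphi(a)=V_\Phi^*\pi_\varphi(a)V_\Phi$, $[\pi_\varphi(A)V_\Phi H]=H_\Phi$ (minimal Stinespring dilation of $\varphi$); $K_\Phi=[\Phi(X)H]\subseteq K$; $\pi_\Phi:X\to L(H_\Phi,K_\Phi)$ is the representation with underlying $*$-representation $\pi_\varphi$ determined by $\pi_\Phi(x)\pi_\varphi(a)V_\Phi h=\Phi(xa)h$; $W_\Phi\in L(K,K_\Phi)$ is the coisometry $W_\Phi k=p_{K_\Phi}k$. Then $\Phi(x)=W_\Phi^*\pi_\Phi(x)V_\Phi$. The commutant of a representation $\pi:X\to L(H',K')$ is the $C^*$-algebra $\pi(X)'=\{T\oplus S\in L(H'\oplus K'):\ \pi(x)T=S\pi(x)\text{ and }\pi(x)^*S=T\pi(x)^*\ \forall x\in X\}$. *)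

theory Defs
  imports "HOL-Analysis.Analysis"
begin

class scaleC = scaleR +
  fixes scaleC :: "complex \<Rightarrow> 'a \<Rightarrow> 'a" (infixr \<open>*\<^sub>C\<close> 75)
  assumes scaleR_scaleC: "scaleR r = scaleC (complex_of_real r)"

class complex_vector = scaleC + ab_group_add +
  assumes scaleC_add_right: "a *\<^sub>C (x + y) = a *\<^sub>C x + a *\<^sub>C y"
    and scaleC_add_left: "(a + b) *\<^sub>C x = a *\<^sub>C x + b *\<^sub>C x"
    and scaleC_scaleC: "a *\<^sub>C b *\<^sub>C x = (a * b) *\<^sub>C x"
    and scaleC_one: "1 *\<^sub>C x = x"

class complex_normed_vector = complex_vector + real_normed_vector +
  assumes norm_scaleC: "norm (a *\<^sub>C x) = cmod a * norm x"

class chilbert = complex_normed_vector + complete_space +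
  fixes cinner :: "'a \<Rightarrow> 'a \<Rightarrow> complex"
  assumes cinner_add_right: "cinner x (y + z) = cinner x y + cinner x z"
    and cinner_scaleC_right: "cinner x (c *\<^sub>C y) = c * cinner x y"
    and cinner_commute: "cinner x y = cnj (cinner y x)"
    and cinner_self_nonneg: "0 \<le> Re (cinner x x)"
    and cinner_self_eq_0: "cinner x x = 0 \<longleftrightarrow> x = 0"
    and norm_eq_sqrt_cinner: "norm x = sqrt (Re (cinner x x))"

text \<open>(Not necessarily unital) C*-algebra.\<close>
class cstar_algebra = complex_normed_vector + banach + ring +
  fixes cstar :: "'a \<Rightarrow> 'a"
  assumes cstar_cstar: "cstar (cstar a) = a"
    and cstar_add: "cstar (a + b) = cstar a + cstar b"
    and cstar_scaleC: "cstar (c *\<^sub>C a) = cnj c *\<^sub>C cstar a"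
    and cstar_mult: "cstar (a * b) = cstar b * cstar a"
    and scaleC_mult_left: "(c *\<^sub>C a) * b = c *\<^sub>C (a * b)"
    and scaleC_mult_right: "a * (c *\<^sub>C b) = c *\<^sub>C (a * b)"
    and norm_mult_ineq: "norm (a * b) \<le> norm a * norm b"
    and cstar_identity: "norm (cstar a * a) = norm a ^ 2"

definition cnonneg :: "complex \<Rightarrow> bool" where
  "cnonneg z \<longleftrightarrow> Im z = 0 \<and> 0 \<le> Re z"

definition clinear :: "('a::complex_vector \<Rightarrow> 'b::complex_vector) \<Rightarrow> bool" where
  "clinear f \<longleftrightarrow> (\<forall>x y. f (x + y) = f x + f y) \<and> (\<forall>c x. f (c *\<^sub>C x) = c *\<^sub>C f x)"

definition bounded_clinear :: "('a::complex_normed_vector \<Rightarrow> 'b::complex_normed_vector) \<Rightarrow> bool" where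
  "bounded_clinear f \<longleftrightarrow> clinear f \<and> (\<exists>B. \<forall>x. norm (f x) \<le> norm x * B)"

definition csubspace :: "'a::complex_vector set \<Rightarrow> bool" where
  "csubspace V \<longleftrightarrow> 0 \<in> V \<and> (\<forall>x\<in>V. \<forall>y\<in>V. x + y \<in> V) \<and> (\<forall>c. \<forall>x\<in>V. c *\<^sub>C x \<in> V)"

definition cspan :: "'a::complex_vector set \<Rightarrow> 'a set" where
  "cspan S = \<Inter>{V. csubspace V \<and> S \<subseteq> V}"

definition ccspan :: "'a::complex_normed_vector set \<Rightarrow> 'a set" where
  "ccspan S = closure (cspan S)"

definition cadj :: "('a::chilbert \<Rightarrow> 'b::chilbert) \<Rightarrow> ('b \<Rightarrow> 'a)" where
  "cadj T = (SOME S. \<forall>x y. cinner (T x) y = cinner x (S y))"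

definition op_pos :: "('a::chilbert \<Rightarrow> 'a) \<Rightarrow> bool" where
  "op_pos T \<longleftrightarrow> bounded_clinear T \<and> (\<forall>x. cnonneg (cinner x (T x)))"

definition op_sqrt :: "('a::chilbert \<Rightarrow> 'a) \<Rightarrow> ('a \<Rightarrow> 'a)" where
  "op_sqrt T = (THE R. op_pos R \<and> R \<circ> R = T)"

definition cproj :: "'a::chilbert set \<Rightarrow> 'a \<Rightarrow> 'a" where
  "cproj M k = (THE m. m \<in> M \<and> (\<forall>u\<in>M. cinner u (k - m) = 0))"

definition cpos :: "'a::cstar_algebra \<Rightarrow> bool" where
  "cpos a \<longleftrightarrow> (\<exists>b. a = cstar b * b)"

definition mat_pos :: "nat \<Rightarrow> (nat \<Rightarrow> nat \<Rightarrow> 'a::cstar_algebra) \<Rightarrow> bool" where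
  "mat_pos n M \<longleftrightarrow> (\<exists>B. \<forall>i<n. \<forall>j<n. M i j = (\<Sum>k<n. cstar (B k i) * B k j))"

text \<open>Completely positive map A \<rightarrow> L(H): linear, and every amplification
  M_n(A) \<rightarrow> M_n(L(H)) = L(H^n) maps positive matrices to positive operators.\<close>
definition cp_map :: "('a::cstar_algebra \<Rightarrow> 'h::chilbert \<Rightarrow> 'h) \<Rightarrow> bool" where
  "cp_map \<phi> \<longleftrightarrow> (\<forall>h. clinear (\<lambda>a. \<phi> a h)) \<and> (\<forall>a. bounded_clinear (\<phi> a)) \<and>
     (\<forall>n M. mat_pos n M \<longrightarrow>
        (\<forall>h::nat \<Rightarrow> 'h. cnonneg (\<Sum>i<n. \<Sum>j<n. cinner (h i) (\<phi> (M i j) (h j)))))"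

definition cideal :: "'a::cstar_algebra set \<Rightarrow> bool" where
  "cideal I \<longleftrightarrow> csubspace I \<and> (\<forall>a. \<forall>x\<in>I. a * x \<in> I \<and> x * a \<in> I)"

definition closed_ideal_hull :: "'a::cstar_algebra set \<Rightarrow> 'a set" where
  "closed_ideal_hull S = \<Inter>{I. cideal I \<and> closed I \<and> S \<subseteq> I}"

definition star_rep :: "('a::cstar_algebra \<Rightarrow> 'h::chilbert \<Rightarrow> 'h) \<Rightarrow> bool" where
  "star_rep \<pi> \<longleftrightarrow> (\<forall>h. clinear (\<lambda>a. \<pi> a h)) \<and> (\<forall>a. bounded_clinear (\<pi> a)) \<and>
     (\<forall>a b. \<pi> (a * b) = \<pi> a \<circ> \<pi> b) \<and> (\<forall>a. \<pi> (cstar a) = cadj (\<pi> a))"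

definition hnorm :: "('x \<Rightarrow> 'x \<Rightarrow> 'a::cstar_algebra) \<Rightarrow> 'x \<Rightarrow> real" where
  "hnorm hinner x = sqrt (norm (hinner x x))"

definition hilbert_module :: "('x::complex_vector \<Rightarrow> 'a::cstar_algebra \<Rightarrow> 'x) \<Rightarrow> ('x \<Rightarrow> 'x \<Rightarrow> 'a) \<Rightarrow> bool" where
  "hilbert_module rmul hinner \<longleftrightarrow>
     (\<forall>x y a. rmul (x + y) a = rmul x a + rmul y a) \<and>
     (\<forall>x a b. rmul x (a + b) = rmul x a + rmul x b) \<and>
     (\<forall>x a b. rmul x (a * b) = rmul (rmul x a) b) \<and>
     (\<forall>c x a. rmul (c *\<^sub>C x) a = c *\<^sub>C rmul x a) \<and>
     (\<forall>c x a. rmul x (c *\<^sub>C a) = c *\<^sub>C rmul x a) \<and>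
     (\<forall>x y z. hinner x (y + z) = hinner x y + hinner x z) \<and>
     (\<forall>c x y. hinner x (c *\<^sub>C y) = c *\<^sub>C hinner x y) \<and>
     (\<forall>x y a. hinner x (rmul y a) = hinner x y * a) \<and>
     (\<forall>x y. hinner y x = cstar (hinner x y)) \<and>
     (\<forall>x. cpos (hinner x x)) \<and>
     (\<forall>x. hinner x x = 0 \<longrightarrow> x = 0) \<and>
     (\<forall>X::nat \<Rightarrow> 'x. (\<forall>e>0. \<exists>N. \<forall>m\<ge>N. \<forall>n\<ge>N. hnorm hinner (X m - X n) < e) \<longrightarrow>
        (\<exists>L. \<forall>e>0. \<exists>N. \<forall>n\<ge>N. hnorm hinner (X n - L) < e))"

definition full_module :: "('x \<Rightarrow> 'x \<Rightarrow> 'a::cstar_algebra) \<Rightarrow> bool" where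
  "full_module hinner \<longleftrightarrow> closed_ideal_hull {hinner x y | x y. True} = UNIV"

definition cp_module_map_with :: "('x \<Rightarrow> 'x \<Rightarrow> 'a::cstar_algebra) \<Rightarrow> ('x \<Rightarrow> 'h::chilbert \<Rightarrow> 'k::chilbert)
    \<Rightarrow> ('a \<Rightarrow> 'h \<Rightarrow> 'h) \<Rightarrow> bool" where
  "cp_module_map_with hinner \<Phi> \<phi> \<longleftrightarrow> (\<forall>x. bounded_clinear (\<Phi> x)) \<and> cp_map \<phi> \<and>
     (\<forall>x y. cadj (\<Phi> x) \<circ> \<Phi> y = \<phi> (hinner x y))"

definition cp_module_map :: "('x \<Rightarrow> 'x \<Rightarrow> 'a::cstar_algebra) \<Rightarrow> ('x \<Rightarrow> 'h::chilbert \<Rightarrow> 'k::chilbert) \<Rightarrow> bool" where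
  "cp_module_map hinner \<Phi> \<longleftrightarrow> (\<exists>\<phi>. cp_module_map_with hinner \<Phi> \<phi>)"

text \<open>Minimal Stinespring dilation (\<pi>\<phi>, H\<Phi>, V) of \<phi>; H\<Phi> is the type 'hp.\<close>
definition min_stinespring :: "('a::cstar_algebra \<Rightarrow> 'h::chilbert \<Rightarrow> 'h) \<Rightarrow> ('a \<Rightarrow> 'hp::chilbert \<Rightarrow> 'hp)
    \<Rightarrow> ('h \<Rightarrow> 'hp) \<Rightarrow> bool" where
  "min_stinespring \<phi> \<pi> V \<longleftrightarrow> star_rep \<pi> \<and> bounded_clinear V \<and>
     (\<forall>a. \<phi> a = cadj V \<circ> \<pi> a \<circ> V) \<and>
     ccspan {\<pi> a (V h) | a h. True} = UNIV"

text \<open>K\<Phi> is the closed subspace [\<Phi>(X)H] of K; \<pi>\<Phi>(x) : H\<Phi> \<rightarrow> K\<Phi> is represented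
  as a map into K with range in K\<Phi>; W\<Phi>^* W\<Phi> is the projection onto K\<Phi>.\<close>
definition stinespring_construction ::
  "('x \<Rightarrow> 'a::cstar_algebra \<Rightarrow> 'x) \<Rightarrow> ('x \<Rightarrow> 'x \<Rightarrow> 'a) \<Rightarrow> ('x \<Rightarrow> 'h::chilbert \<Rightarrow> 'k::chilbert)
   \<Rightarrow> ('a \<Rightarrow> 'h \<Rightarrow> 'h) \<Rightarrow> ('a \<Rightarrow> 'hp::chilbert \<Rightarrow> 'hp) \<Rightarrow> ('h \<Rightarrow> 'hp) \<Rightarrow> 'k set
   \<Rightarrow> ('x \<Rightarrow> 'hp \<Rightarrow> 'k) \<Rightarrow> bool" where
  "stinespring_construction rmul hinner \<Phi> \<phi> \<pi>\<phi> V K\<Phi> \<pi>\<Phi> \<longleftrightarrow>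
     min_stinespring \<phi> \<pi>\<phi> V \<and>
     K\<Phi> = ccspan {\<Phi> x h | x h. True} \<and>
     (\<forall>x. bounded_clinear (\<pi>\<Phi> x) \<and> range (\<pi>\<Phi> x) \<subseteq> K\<Phi>) \<and>
     (\<forall>x y. cadj (\<pi>\<Phi> x) \<circ> \<pi>\<Phi> y = \<pi>\<phi> (hinner x y)) \<and>
     (\<forall>x a h. \<pi>\<Phi> x (\<pi>\<phi> a (V h)) = \<Phi> (rmul x a) h)"

end

theory Submission
  imports Defs
begin


lemma scaleC_zero_right[simp]: "a *\<^sub>C (0::'a::complex_vector) = 0"
  using scaleC_add_right[of a "0::'a" 0] by simp
lemma scaleC_zero_left[simp]: "0 *\<^sub>C (x::'a::complex_vector) = 0"
  using scaleC_add_left[of 0 0 x] by simp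
lemma scaleC_minus_right: "a *\<^sub>C (- x::'a::complex_vector) = - (a *\<^sub>C x)"
  using scaleC_add_right[of a x "-x"] by (simp add: eq_neg_iff_add_eq_0 add.commute)
lemma scaleC_minus_left: "(- a) *\<^sub>C (x::'a::complex_vector) = - (a *\<^sub>C x)"
  using scaleC_add_left[of a "-a" x] by (simp add: eq_neg_iff_add_eq_0 add.commute)
lemma scaleC_diff_right: "a *\<^sub>C (x - y::'a::complex_vector) = a *\<^sub>C x - a *\<^sub>C y"
  by (simp only: diff_conv_add_uminus scaleC_add_right scaleC_minus_right)
lemma scaleC_diff_left: "(a - b) *\<^sub>C (x::'a::complex_vector) = a *\<^sub>C x - b *\<^sub>C x"
  by (simp only: diff_conv_add_uminus scaleC_add_left scaleC_minus_left)
lemma scaleC_sum_right: "a *\<^sub>C (\<Sum>i\<in>I. f i) = (\<Sum>i\<in>I. a *\<^sub>C (f i::'a::complex_vector))"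
  by (induction I rule: infinite_finite_induct) (auto simp: scaleC_add_right)
lemma scaleC_of_real: "complex_of_real r *\<^sub>C (x::'a::complex_vector) = r *\<^sub>R x"
  by (subst scaleR_scaleC) (rule refl)

lemma cinner_zero_right[simp]: "cinner (x::'a::chilbert) 0 = 0"
  using cinner_add_right[of x 0 0] by simp
lemma cinner_add_left: "cinner (x + y::'a::chilbert) z = cinner x z + cinner y z"
  by (subst (1 2 3) cinner_commute) (simp add: cinner_add_right)
lemma cinner_zero_left[simp]: "cinner 0 (x::'a::chilbert) = 0"
  by (subst cinner_commute) simp
lemma cinner_scaleC_left: "cinner (c *\<^sub>C x::'a::chilbert) y = cnj c * cinner x y"
  by (subst (1 2) cinner_commute) (simp add: cinner_scaleC_right)
lemma cinner_minus_right: "cinner (x::'a::chilbert) (- y) = - cinner x y"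
  using cinner_add_right[of x y "-y"] by (simp add: eq_neg_iff_add_eq_0 add.commute)
lemma cinner_minus_left: "cinner (- x::'a::chilbert) y = - cinner x y"
  using cinner_add_left[of x "-x" y] by (simp add: eq_neg_iff_add_eq_0 add.commute)
lemma cinner_diff_right: "cinner (x::'a::chilbert) (y - z) = cinner x y - cinner x z"
  by (simp only: diff_conv_add_uminus cinner_add_right cinner_minus_right)
lemma cinner_diff_left: "cinner (x - y::'a::chilbert) z = cinner x z - cinner y z"
  by (simp only: diff_conv_add_uminus cinner_add_left cinner_minus_left)
lemma cinner_sum_right: "cinner (x::'a::chilbert) (\<Sum>i\<in>I. f i) = (\<Sum>i\<in>I. cinner x (f i))"
  by (induction I rule: infinite_finite_induct) (auto simp: cinner_add_right)
lemma cinner_sum_left: "cinner (\<Sum>i\<in>I. f i) (x::'a::chilbert) = (\<Sum>i\<in>I. cinner (f i) x)"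
  by (induction I rule: infinite_finite_induct) (auto simp: cinner_add_left)
lemma cinner_scaleR_right: "cinner (x::'a::chilbert) (r *\<^sub>R y) = complex_of_real r * cinner x y"
  by (subst scaleR_scaleC) (rule cinner_scaleC_right)
lemma cinner_scaleR_left: "cinner (r *\<^sub>R x::'a::chilbert) y = complex_of_real r * cinner x y"
proof -
  have "cinner (r *\<^sub>R x) y = cinner (complex_of_real r *\<^sub>C x) y" by (subst scaleR_scaleC) (rule refl)
  also have "\<dots> = cnj (complex_of_real r) * cinner x y" by (rule cinner_scaleC_left)
  finally show ?thesis by simp
qed

lemma cinner_self_Im: "Im (cinner (x::'a::chilbert) x) = 0"
proof -
  have "Im (cinner x x) = Im (cnj (cinner x x))" by (subst cinner_commute) (rule refl)
  then show ?thesis by simp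
qed
lemma Re_cinner_self: "Re (cinner (x::'a::chilbert) x) = (norm x)\<^sup>2"
  by (simp add: norm_eq_sqrt_cinner cinner_self_nonneg)
lemma cinner_self_norm: "cinner (x::'a::chilbert) x = complex_of_real ((norm x)\<^sup>2)"
  by (simp add: complex_eq_iff Re_cinner_self cinner_self_Im)

lemma cinner_expand:
  "cinner (x + l *\<^sub>C y) (u + m *\<^sub>C (v::'a::chilbert)) =
     cinner x u + m * cinner x v + cnj l * cinner y u + cnj l * m * cinner y v"
  unfolding cinner_add_left cinner_add_right cinner_scaleC_left cinner_scaleC_right
  by (simp add: ring_distribs mult.assoc)

lemma cinner_ext: "(\<And>x. cinner x y = cinner x (z::'a::chilbert)) \<Longrightarrow> y = z"
proof -
  assume "\<And>x. cinner x y = cinner x z"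
  then have "cinner (y - z) (y - z) = 0" by (simp add: cinner_diff_right)
  then show "y = z" by (simp add: cinner_self_eq_0)
qed

lemma clinear_add: "clinear f \<Longrightarrow> f (x + y) = f x + f y" by (simp add: clinear_def)
lemma clinear_scaleC: "clinear f \<Longrightarrow> f (c *\<^sub>C x) = c *\<^sub>C f x" by (simp add: clinear_def)
lemma clinear_zero: "clinear f \<Longrightarrow> f 0 = 0"
proof -
  assume "clinear f" then have "f (0 + 0) = f 0 + f 0" by (rule clinear_add)
  then show ?thesis by simp
qed
lemma clinear_minus: "clinear f \<Longrightarrow> f (- x) = - f x"
proof -
  assume f: "clinear f" then have "f (x + - x) = f x + f (- x)" by (rule clinear_add)
  then show ?thesis using clinear_zero[OF f] by (simp add: eq_neg_iff_add_eq_0 add.commute)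
qed
lemma clinear_diff: "clinear f \<Longrightarrow> f (x - y) = f x - f y"
  by (simp only: diff_conv_add_uminus clinear_add clinear_minus)
lemma clinear_sum: "clinear f \<Longrightarrow> f (\<Sum>i\<in>I. g i) = (\<Sum>i\<in>I. f (g i))"
  by (induction I rule: infinite_finite_induct) (auto simp: clinear_add clinear_zero)
lemma clinear_scaleR: "clinear f \<Longrightarrow> f (r *\<^sub>R x) = r *\<^sub>R f x"
  by (simp add: scaleR_scaleC clinear_scaleC)

lemma bclinear_clinear: "bounded_clinear f \<Longrightarrow> clinear f" by (simp add: bounded_clinear_def)

lemma bclinear_bounded_linear: "bounded_clinear f \<Longrightarrow> bounded_linear f"
  unfolding bounded_clinear_def
  by (auto intro: bounded_linear_intro clinear_add clinear_scaleR)

lemma clinear_compose: "clinear f \<Longrightarrow> clinear g \<Longrightarrow> clinear (f \<circ> g)"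
  by (simp add: clinear_def)

lemma bclinear_compose: "bounded_clinear f \<Longrightarrow> bounded_clinear g \<Longrightarrow> bounded_clinear (f \<circ> g)"
proof -
  assume f: "bounded_clinear f" and g: "bounded_clinear g"
  then obtain A B where A: "\<forall>x. norm (f x) \<le> norm x * A" and B: "\<forall>x. norm (g x) \<le> norm x * B"
    unfolding bounded_clinear_def by blast
  have "norm (f (g x)) \<le> norm x * (B * max A 0)" for x
  proof -
    have "norm (f (g x)) \<le> norm (g x) * A" using A by blast
    also have "\<dots> \<le> norm (g x) * max A 0" by (intro mult_left_mono) auto
    also have "\<dots> \<le> (norm x * B) * max A 0" using B by (intro mult_right_mono) auto
    finally show ?thesis by (simp add: mult.assoc)
  qed
  then show ?thesis using f g unfolding bounded_clinear_def
    by (auto simp: clinear_compose)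
qed

lemma bclinear_id: "bounded_clinear (id::'a::complex_normed_vector \<Rightarrow> 'a)"
  unfolding bounded_clinear_def clinear_def by (auto intro: exI[of _ 1])

lemma bclinear_bound: "bounded_clinear f \<Longrightarrow> \<exists>B>0. \<forall>x. norm (f x) \<le> B * norm x"
proof -
  assume "bounded_clinear f"
  then obtain K where K: "\<forall>x. norm (f x) \<le> norm x * K" unfolding bounded_clinear_def by blast
  have "norm (f x) \<le> (max K 1) * norm x" for x
  proof -
    have "norm (f x) \<le> norm x * K" using K by blast
    also have "\<dots> \<le> norm x * max K 1" by (intro mult_left_mono) auto
    finally show ?thesis by (simp add: mult.commute)
  qed
  then show ?thesis by (intro exI[of _ "max K 1"]) auto
qed

section \<open>Cauchy-Schwarz for positive forms\<close>

lemma hermitian_of_real_form: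
  assumes "clinear P" and "\<And>z. Im (cinner z (P z)) = 0"
  shows "cinner x (P y) = cnj (cinner y (P (x::'a::chilbert)))"
proof -
  let ?u = "cinner x (P y)" and ?v = "cinner y (P x)"
  have e: "cinner (x + l *\<^sub>C y) (P (x + l *\<^sub>C y)) =
      cinner x (P x) + l * ?u + cnj l * ?v + cnj l * l * cinner y (P y)" for l
    using assms(1) by (simp add: clinear_add clinear_scaleC cinner_expand)
  have 1: "Im (?u + ?v) = 0" using e[of 1] assms(2)[of "x + 1 *\<^sub>C y"] assms(2)[of x] assms(2)[of y]
    by simp
  have 2: "Re (?u - ?v) = 0" using e[of "\<i>"] assms(2)[of "x + \<i> *\<^sub>C y"] assms(2)[of x] assms(2)[of y]
    by simp
  show ?thesis using 1 2 by (simp add: complex_eq_iff)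
qed

lemma pos_CS:
  assumes "clinear P" and "\<And>z. cnonneg (cinner z (P z))"
  shows "(cmod (cinner x (P y)))\<^sup>2 \<le> Re (cinner x (P x)) * Re (cinner y (P (y::'a::chilbert)))"
proof -
  have herm: "cinner a (P b) = cnj (cinner b (P a))" for a b
    using hermitian_of_real_form[OF assms(1)] assms(2) unfolding cnonneg_def by blast
  define w where "w = cinner x (P y)"
  define a where "a = Re (cinner x (P x))"
  define b where "b = Re (cinner y (P y))"
  define c where "c = (cmod w)\<^sup>2"
  have a0: "a \<ge> 0" and b0: "b \<ge> 0" using assms(2) unfolding cnonneg_def a_def b_def by auto
  have Ia: "Im (cinner x (P x)) = 0" and Ib: "Im (cinner y (P y)) = 0"
    using assms(2) unfolding cnonneg_def by auto
  have q: "0 \<le> a - 2 * t * c + t\<^sup>2 * c * b" for t :: real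
  proof -
    define l where "l = - (complex_of_real t * cnj w)"
    have ex: "cinner (x + l *\<^sub>C y) (P (x + l *\<^sub>C y)) =
      cinner x (P x) + l * w + cnj l * cnj w + cnj l * l * cinner y (P y)"
      using assms(1) herm[of y x] by (simp add: clinear_add clinear_scaleC cinner_expand w_def)
    have wc: "w * cnj w = complex_of_real c" unfolding c_def by (rule complex_norm_square[symmetric])
    moreover have "l * w = - complex_of_real (t * c)"
      unfolding l_def using wc by (simp add: mult_ac)
    moreover have "cnj l * cnj w = - complex_of_real (t * c)"
      unfolding l_def using wc by (simp add: mult_ac)
    moreover have "cnj l * l = complex_of_real (t\<^sup>2 * c)"
      unfolding l_def using wc by (simp add: mult_ac power2_eq_square)
    ultimately have "cinner (x + l *\<^sub>C y) (P (x + l *\<^sub>C y)) =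
      cinner x (P x) - 2 * complex_of_real (t * c) + complex_of_real (t\<^sup>2 * c) * cinner y (P y)"
      using ex by simp
    then have "Re (cinner (x + l *\<^sub>C y) (P (x + l *\<^sub>C y))) = a - 2 * t * c + t\<^sup>2 * c * b"
      using Ia Ib unfolding a_def b_def by simp
    moreover have "0 \<le> Re (cinner (x + l *\<^sub>C y) (P (x + l *\<^sub>C y)))"
      using assms(2) unfolding cnonneg_def by auto
    ultimately show ?thesis by simp
  qed
  have c0: "c \<ge> 0" unfolding c_def by simp
  have "c \<le> a * b"
  proof (cases "c = 0")
    case True then show ?thesis using a0 b0 by simp
  next
    case False
    then have cpos: "c > 0" using c0 by simp
    show ?thesis
    proof (cases "b = 0")
      case True
      have "0 \<le> a - 2 * ((a + 1) / c) * c" using q[of "(a+1)/c"] True by simp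
      then show ?thesis using cpos a0 by simp
    next
      case False
      then have bp: "b > 0" using b0 by simp
      have "0 \<le> a - 2 * (1/b) * c + (1/b)\<^sup>2 * c * b" using q[of "1/b"] .
      also have "\<dots> = a - c / b" using bp by (simp add: power2_eq_square field_simps)
      finally show ?thesis using bp by (simp add: field_simps)
    qed
  qed
  then show ?thesis unfolding c_def w_def a_def b_def .
qed

lemma clinear_id: "clinear id" by (simp add: clinear_def)

lemma cinner_CS: "cmod (cinner x (y::'a::chilbert)) \<le> norm x * norm y"
proof -
  have "(cmod (cinner x (id y)))\<^sup>2 \<le> Re (cinner x (id x)) * Re (cinner y (id y))"
    by (rule pos_CS[OF clinear_id]) (simp add: cnonneg_def cinner_self_Im cinner_self_nonneg)
  then have "(cmod (cinner x y))\<^sup>2 \<le> (norm x * norm y)\<^sup>2"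
    by (simp add: Re_cinner_self power_mult_distrib)
  then show ?thesis by (rule power2_le_imp_le) simp
qed

lemma bounded_linear_cinner_right: "bounded_linear (\<lambda>y. cinner (x::'a::chilbert) y)"
  by (rule bounded_linear_intro[of _ "norm x"])
     (auto simp: cinner_add_right cinner_scaleR_right scaleR_conv_of_real,
      metis cinner_CS mult.commute)


lemma parallelogram:
  "(norm (a + b))\<^sup>2 + (norm (a - b))\<^sup>2 = 2 * (norm a)\<^sup>2 + 2 * (norm (b::'a::chilbert))\<^sup>2"
  unfolding Re_cinner_self[symmetric]
  by (simp add: cinner_add_left cinner_add_right cinner_diff_left cinner_diff_right)

lemma proj_exists:
  fixes N :: "'a::chilbert set" and x0 :: 'a
  assumes cl: "closed N" and N0: "0 \<in> N" and Nadd: "\<And>u v. u \<in> N \<Longrightarrow> v \<in> N \<Longrightarrow> u + v \<in> N"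
    and Nsc: "\<And>c u. u \<in> N \<Longrightarrow> c *\<^sub>C u \<in> N"
  shows "\<exists>p\<in>N. \<forall>n\<in>N. cinner n (x0 - p) = 0"
proof -
  have NR: "r *\<^sub>R u \<in> N" if "u \<in> N" for r u using Nsc[OF that, of "complex_of_real r"]
    by (simp add: scaleC_of_real)
  define D where "D = (\<lambda>n. norm (x0 - n)) ` N"
  define d where "d = Inf D"
  have Dne: "D \<noteq> {}" using N0 unfolding D_def by auto
  have bdd: "bdd_below D" unfolding D_def by (rule bdd_belowI[of _ 0]) auto
  have dle: "d \<le> norm (x0 - n)" if "n \<in> N" for n
    unfolding d_def using that bdd by (intro cInf_lower) (auto simp: D_def)
  have d0: "d \<ge> 0" using dle[OF N0] Dne bdd unfolding d_def
    by (intro cInf_greatest) (auto simp: D_def)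
  define e where "e k = inverse (real (Suc k))" for k
  have e0: "0 < e k" and e1: "e k \<le> 1" for k unfolding e_def by (auto simp: inverse_le_1_iff)
  have "\<exists>n\<in>N. norm (x0 - n) < d + e k" for k
  proof -
    have "Inf D < d + e k" using e0[of k] unfolding d_def by simp
    from cInf_lessD[OF Dne this] show ?thesis unfolding D_def by auto
  qed
  then obtain s where sN: "\<And>k. s k \<in> N" and sd: "\<And>k. norm (x0 - s k) < d + e k" by metis
  have key: "(norm (s k - s m))\<^sup>2 \<le> 2 * (2 * d + 1) * (e k + e m)" for k m
  proof -
    define a where "a = x0 - s k"
    define b where "b = x0 - s m"
    define mid where "mid = (1/2::real) *\<^sub>R (s k + s m)"
    have midN: "mid \<in> N" unfolding mid_def by (intro NR Nadd sN)
    have "a + b = 2 *\<^sub>R (x0 - mid)" unfolding a_def b_def mid_def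
      by (simp add: algebra_simps scaleR_2)
    then have "norm (a + b) = 2 * norm (x0 - mid)" by simp
    then have ab: "(norm (a + b))\<^sup>2 \<ge> 4 * d\<^sup>2" using dle[OF midN] d0
      by (simp add: power2_eq_square mult_mono)
    have "a - b = s m - s k" unfolding a_def b_def by simp
    then have "(norm (s k - s m))\<^sup>2 = (norm (a - b))\<^sup>2" by (simp add: norm_minus_commute)
    also have "\<dots> = 2 * (norm a)\<^sup>2 + 2 * (norm b)\<^sup>2 - (norm (a + b))\<^sup>2"
      using parallelogram[of a b] by simp
    also have "\<dots> \<le> 2 * (d + e k)\<^sup>2 + 2 * (d + e m)\<^sup>2 - 4 * d\<^sup>2"
    proof -
      have "(norm a)\<^sup>2 \<le> (d + e k)\<^sup>2" unfolding a_def using sd[of k]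
        by (intro power_mono) auto
      moreover have "(norm b)\<^sup>2 \<le> (d + e m)\<^sup>2" unfolding b_def using sd[of m]
        by (intro power_mono) auto
      ultimately show ?thesis using ab by simp
    qed
    also have "\<dots> = 2 * (2 * d * e k + (e k)\<^sup>2) + 2 * (2 * d * e m + (e m)\<^sup>2)"
      by (simp add: power2_eq_square algebra_simps)
    also have "\<dots> \<le> 2 * (2 * d * e k + e k) + 2 * (2 * d * e m + e m)"
    proof -
      have "(e k)\<^sup>2 \<le> e k" "(e m)\<^sup>2 \<le> e m" using e0 e1
        by (auto simp: power2_eq_square mult_le_cancel_left1 less_imp_le intro: mult_left_le)
      then show ?thesis by simp
    qed
    also have "\<dots> = 2 * (2 * d + 1) * (e k + e m)" by (simp add: algebra_simps)
    finally show ?thesis .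
  qed
  have "Cauchy s"
  proof (rule metric_CauchyI)
    fix eps :: real assume eps: "eps > 0"
    obtain K :: nat where K: "4 * (2 * d + 1) / eps\<^sup>2 < real K" using reals_Archimedean2 by blast
    have "dist (s k) (s m) < eps" if "k \<ge> K" "m \<ge> K" for k m
    proof -
      have ek: "e k \<le> inverse (real (Suc K))" "e m \<le> inverse (real (Suc K))"
        unfolding e_def using that by (auto intro!: le_imp_inverse_le)
      have "(norm (s k - s m))\<^sup>2 \<le> 2 * (2 * d + 1) * (e k + e m)" by (rule key)
      also have "\<dots> \<le> 2 * (2 * d + 1) * (2 * inverse (real (Suc K)))"
        using ek d0 by (intro mult_left_mono) auto
      also have "\<dots> = 4 * (2 * d + 1) / real (Suc K)" by (simp add: field_simps)
      also have "\<dots> < eps\<^sup>2"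
      proof -
        have "4 * (2 * d + 1) < eps\<^sup>2 * real K" using K eps by (simp add: field_simps)
        also have "\<dots> \<le> eps\<^sup>2 * real (Suc K)" by (intro mult_left_mono) auto
        finally show ?thesis by (simp add: field_simps)
      qed
      finally have "(norm (s k - s m))\<^sup>2 < eps\<^sup>2" .
      then have "norm (s k - s m) < eps" using eps by (simp add: power_less_imp_less_base)
      then show ?thesis by (simp add: dist_norm)
    qed
    then show "\<exists>M. \<forall>m\<ge>M. \<forall>n\<ge>M. dist (s m) (s n) < eps" by blast
  qed
  then obtain p where sp: "s \<longlonglongrightarrow> p" using Cauchy_convergent_iff convergent_def by blast
  have pN: "p \<in> N" using closed_sequentially[OF cl sN sp] .
  have "norm (x0 - p) \<le> d"
  proof (rule LIMSEQ_le)
    show "(\<lambda>k. norm (x0 - s k)) \<longlonglongrightarrow> norm (x0 - p)" by (intro tendsto_intros sp)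
    show "(\<lambda>k. d + e k) \<longlonglongrightarrow> d" unfolding e_def
      using tendsto_add[OF tendsto_const LIMSEQ_inverse_real_of_nat, of d] by simp
    show "\<exists>N. \<forall>n\<ge>N. norm (x0 - s n) \<le> d + e n" using sd less_imp_le by blast
  qed
  then have minp: "norm (x0 - p) \<le> norm (x0 - n)" if "n \<in> N" for n using dle[OF that] by simp
  have "cinner n (x0 - p) = 0" if nN: "n \<in> N" for n
  proof -
    define y where "y = x0 - p"
    define w where "w = cinner n y"
    define c where "c = (cmod w)\<^sup>2"
    define b where "b = (norm n)\<^sup>2"
    have wc: "w * cnj w = complex_of_real c" unfolding c_def by (rule complex_norm_square[symmetric])
    have q: "0 \<le> - 2 * t * c + t\<^sup>2 * c * b" for t :: real
    proof -
      define l where "l = complex_of_real t * w"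
      have "p + l *\<^sub>C n \<in> N" by (intro Nadd pN Nsc nN)
      then have le: "(norm y)\<^sup>2 \<le> (norm (x0 - (p + l *\<^sub>C n)))\<^sup>2" unfolding y_def
        using minp by (intro power_mono) auto
      have eq: "x0 - (p + l *\<^sub>C n) = y + (- l) *\<^sub>C n" unfolding y_def
        by (simp add: scaleC_minus_left)
      have ex: "cinner (y + (- l) *\<^sub>C n) (y + (- l) *\<^sub>C n) =
          cinner y y + (- l) * cinner y n + cnj (- l) * cinner n y + cnj (- l) * (- l) * cinner n n"
        by (rule cinner_expand)
      have yn: "cinner y n = cnj w" unfolding w_def by (subst cinner_commute) simp
      have "(- l) * cinner y n = - complex_of_real (t * c)" unfolding yn l_def using wc by (simp add: mult_ac)
      moreover have "cnj (- l) * cinner n y = - complex_of_real (t * c)" unfolding l_def w_def[symmetric]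
        using wc by (simp add: mult_ac)
      moreover have "cnj (- l) * (- l) = complex_of_real (t\<^sup>2 * c)" unfolding l_def
        using wc by (simp add: mult_ac power2_eq_square)
      ultimately have "cinner (y + (- l) *\<^sub>C n) (y + (- l) *\<^sub>C n) =
          cinner y y - 2 * complex_of_real (t * c) + complex_of_real (t\<^sup>2 * c) * cinner n n"
        using ex by simp
      then have "(norm (y + (- l) *\<^sub>C n))\<^sup>2 = (norm y)\<^sup>2 - 2 * t * c + t\<^sup>2 * c * b"
        unfolding b_def Re_cinner_self[symmetric] by (simp add: cinner_self_Im)
      then show ?thesis using le eq by simp
    qed
    have c0: "c \<ge> 0" unfolding c_def by simp
    have b0: "b \<ge> 0" unfolding b_def by simp
    define t where "t = inverse (b + 1)"
    have t0: "t > 0" using b0 unfolding t_def by simp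
    have tb: "t * b < 1" using b0 unfolding t_def by (simp add: field_simps)
    have "0 \<le> t * c * (t * b - 2)" using q[of t] by (simp add: power2_eq_square algebra_simps)
    moreover have "t * b - 2 < 0" using tb by simp
    ultimately have "t * c \<le> 0"
    proof -
      assume h1: "0 \<le> t * c * (t * b - 2)" and h2: "t * b - 2 < 0"
      show "t * c \<le> 0"
      proof (rule ccontr)
        assume "\<not> t * c \<le> 0"
        then have "t * c * (t * b - 2) < 0" using h2 by (simp add: mult_pos_neg)
        then show False using h1 by linarith
      qed
    qed
    then have "c = 0" using t0 c0 by (simp add: mult_le_0_iff)
    then show ?thesis unfolding c_def w_def y_def by simp
  qed
  then show ?thesis using pN by blast
qed

lemma riesz:
  fixes g :: "'a::chilbert \<Rightarrow> complex"
  assumes gadd: "\<And>x y. g (x + y) = g x + g y" and gsc: "\<And>c x. g (c *\<^sub>C x) = c * g x"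
    and gb: "\<And>x. cmod (g x) \<le> B * norm x"
  shows "\<exists>z. \<forall>x. g x = cinner z x"
proof -
  have bl: "bounded_linear g"
    by (rule bounded_linear_intro[of _ B]) (auto simp: gadd gsc scaleR_scaleC[symmetric] scaleR_conv_of_real
        gsc[of "complex_of_real _", unfolded scaleC_of_real] gb mult.commute)
  then interpret g: bounded_linear g .
  show ?thesis
  proof (cases "\<forall>x. g x = 0")
    case True then show ?thesis by (intro exI[of _ 0]) simp
  next
    case False
    then obtain x0 where gx0: "g x0 \<noteq> 0" by blast
    define N where "N = {x. g x = 0}"
    have cl: "closed N" unfolding N_def
      by (intro closed_Collect_eq g.continuous_on continuous_on_id continuous_on_const)
    obtain p where pN: "p \<in> N" and perp: "\<And>n. n \<in> N \<Longrightarrow> cinner n (x0 - p) = 0"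
      using proj_exists[OF cl, of x0] unfolding N_def by (auto simp: gadd gsc g.zero)
    define y where "y = x0 - p"
    have gy: "g y = g x0" using pN unfolding y_def N_def by (simp add: g.diff)
    have yy: "cinner y y \<noteq> 0" using gy gx0 by (auto simp: cinner_self_eq_0 g.zero)
    have "g x = cinner (cnj (g y / cinner y y) *\<^sub>C y) x" for x
    proof -
      define n where "n = x - (g x / g y) *\<^sub>C y"
      have "g n = 0" unfolding n_def using gy gx0 by (simp add: g.diff gsc)
      then have "cinner n y = 0" using perp unfolding N_def y_def by auto
      then have "cinner y n = 0" by (subst cinner_commute) simp
      then have "cinner y x = (g x / g y) * cinner y y"
        unfolding n_def by (simp add: cinner_diff_right cinner_scaleC_right)
      then show ?thesis using gy gx0 yy by (simp add: cinner_scaleC_left field_simps)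
    qed
    then show ?thesis by blast
  qed
qed

definition has_adj :: "('a::chilbert \<Rightarrow> 'b::chilbert) \<Rightarrow> ('b \<Rightarrow> 'a) \<Rightarrow> bool" where
  "has_adj F G \<longleftrightarrow> (\<forall>x y. cinner (F x) y = cinner x (G y))"

lemma adj_exists: assumes "bounded_clinear F" shows "has_adj F (cadj F)"
proof -
  obtain B where B: "\<And>x. norm (F x) \<le> B * norm x" using bclinear_bound[OF assms] by blast
  have F: "clinear F" using assms by (simp add: bounded_clinear_def)
  have "\<exists>z. \<forall>x. cinner y (F x) = cinner z x" for y
  proof (rule riesz[of _ "norm y * B"])
    show "cinner y (F (a + b)) = cinner y (F a) + cinner y (F b)" for a b
      by (simp add: clinear_add[OF F] cinner_add_right)
    show "cinner y (F (c *\<^sub>C a)) = c * cinner y (F a)" for c a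
      by (simp add: clinear_scaleC[OF F] cinner_scaleC_right)
    show "cmod (cinner y (F x)) \<le> norm y * B * norm x" for x
    proof -
      have "cmod (cinner y (F x)) \<le> norm y * norm (F x)" by (rule cinner_CS)
      also have "\<dots> \<le> norm y * (B * norm x)" by (intro mult_left_mono B) simp
      finally show ?thesis by (simp add: mult.assoc)
    qed
  qed
  then obtain G where G: "\<And>y x. cinner y (F x) = cinner (G y) x" by metis
  have "cinner (F x) y = cinner x (G y)" for x y
    using G[of y x] cinner_commute[of "F x" y] cinner_commute[of x "G y"] by simp
  then have "\<forall>x y. cinner (F x) y = cinner x (G y)" by blast
  then have "\<exists>S. \<forall>x y. cinner (F x) y = cinner x (S y)" by blast
  then have "\<forall>x y. cinner (F x) y = cinner x (cadj F y)"
    unfolding cadj_def by (rule someI_ex)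
  then show ?thesis unfolding has_adj_def .
qed

lemma adj_unique: assumes "has_adj F G" shows "cadj F = G"
proof -
  have "\<exists>S. \<forall>x y. cinner (F x) y = cinner x (S y)" using assms unfolding has_adj_def by blast
  then have S: "\<forall>x y. cinner (F x) y = cinner x (cadj F y)" unfolding cadj_def by (rule someI_ex)
  show ?thesis
  proof
    fix y show "cadj F y = G y"
    proof (rule cinner_ext)
      fix x
      have "cinner x (cadj F y) = cinner (F x) y" using S by simp
      also have "\<dots> = cinner x (G y)" using assms unfolding has_adj_def by simp
      finally show "cinner x (cadj F y) = cinner x (G y)" .
    qed
  qed
qed

lemma adj_apply: "bounded_clinear F \<Longrightarrow> cinner (F x) y = cinner x (cadj F y)"
proof -
  assume "bounded_clinear F"
  from adj_exists[OF this] show ?thesis unfolding has_adj_def by blast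
qed

lemma adj_apply': "bounded_clinear F \<Longrightarrow> cinner (cadj F y) x = cinner y (F x)"
proof -
  assume F: "bounded_clinear F"
  have "cinner (F x) y = cinner x (cadj F y)" by (rule adj_apply[OF F])
  then show ?thesis using cinner_commute[of "cadj F y" x] cinner_commute[of y "F x"] by simp
qed

lemma adj_bclinear: assumes F: "bounded_clinear F" shows "bounded_clinear (cadj F)"
proof -
  obtain B where B: "\<And>x. norm (F x) \<le> B * norm x" and B0: "B > 0" using bclinear_bound[OF assms] by blast
  have add: "cadj F (a + b) = cadj F a + cadj F b" for a b
    by (rule cinner_ext) (simp add: adj_apply[OF F, symmetric] cinner_add_right)
  have sc: "cadj F (c *\<^sub>C a) = c *\<^sub>C cadj F a" for a c
    by (rule cinner_ext) (simp add: adj_apply[OF F, symmetric] cinner_scaleC_right)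
  have cl: "clinear (cadj F)" unfolding clinear_def using add sc by blast
  have "norm (cadj F y) \<le> norm y * B" for y
  proof -
    have "(norm (cadj F y))\<^sup>2 = Re (cinner (cadj F y) (cadj F y))" by (simp add: Re_cinner_self)
    also have "\<dots> = Re (cinner (F (cadj F y)) y)" by (simp add: adj_apply[OF F])
    also have "\<dots> \<le> cmod (cinner (F (cadj F y)) y)" by (rule complex_Re_le_cmod)
    also have "\<dots> \<le> norm (F (cadj F y)) * norm y" by (rule cinner_CS)
    also have "\<dots> \<le> (B * norm (cadj F y)) * norm y" by (intro mult_right_mono B) simp
    finally have le: "norm (cadj F y) * norm (cadj F y) \<le> norm (cadj F y) * (norm y * B)"
      by (simp add: power2_eq_square mult_ac)
    show ?thesis
    proof (cases "norm (cadj F y) = 0")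
      case True then show ?thesis using B0 by simp
    next
      case False then have "norm (cadj F y) > 0" by simp
      with le show ?thesis by (simp add: mult_le_cancel_left_pos)
    qed
  qed
  then show ?thesis using cl unfolding bounded_clinear_def by blast
qed


context chilbert begin
subclass banach ..
end

lemma has_sum_diff':
  fixes f g :: "'a \<Rightarrow> 'b::topological_ab_group_add"
  assumes "(f has_sum a) A" "(g has_sum b) A"
  shows "((\<lambda>x. f x - g x) has_sum (a - b)) A"
proof -
  have "((\<lambda>x. - g x) has_sum (- b)) A" using assms(2) by (simp add: has_sum_uminus)
  from has_sum_add[OF assms(1) this] show ?thesis by simp
qed

section \<open>Positive operators\<close>

lemma pos_herm: "op_pos P \<Longrightarrow> cinner x (P y) = cinner (P x) (y::'a::chilbert)"
proof -
  assume P: "op_pos P"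
  then have "cinner x (P y) = cnj (cinner y (P x))"
    by (intro hermitian_of_real_form) (auto simp: op_pos_def bounded_clinear_def cnonneg_def)
  then show ?thesis using cinner_commute[of "P x" y] by simp
qed

lemma pos_bcl: "op_pos P \<Longrightarrow> bounded_clinear P" by (simp add: op_pos_def)

lemma pos_adj: "op_pos P \<Longrightarrow> cadj P = P"
  by (intro adj_unique) (simp add: has_adj_def pos_herm)

lemma pos_CS': "op_pos P \<Longrightarrow>
  (cmod (cinner x (P y)))\<^sup>2 \<le> Re (cinner x (P x)) * Re (cinner y (P (y::'a::chilbert)))"
proof -
  assume P: "op_pos P"
  have c: "clinear P" using P by (simp add: op_pos_def bounded_clinear_def)
  have n: "\<And>z. cnonneg (cinner z (P z))" using P by (simp add: op_pos_def)
  show ?thesis by (rule pos_CS[OF c n])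
qed

lemma pos_zero_form:
  assumes "clinear P" "\<And>z. cnonneg (cinner z (P z))" "\<And>z. Re (cinner z (P z)) = 0"
  shows "P y = (0::'a::chilbert)"
proof -
  have "(cmod (cinner (P y) (P y)))\<^sup>2 \<le> Re (cinner (P y) (P (P y))) * Re (cinner y (P y))"
    by (rule pos_CS[OF assms(1,2)])
  then have "cinner (P y) (P y) = 0" using assms(3)[of y] by simp
  then show ?thesis by (simp add: cinner_self_eq_0)
qed

section \<open>The coefficients of the square root series\<close>

function cc :: "nat \<Rightarrow> real" where
  "cc n = (if n = 1 then 1/2 else (\<Sum>i\<in>{1..<n}. cc i * cc (n - i)) / 2)"
  by pat_completeness auto
termination apply (relation "Wellfounded.measure (\<lambda>n. n)")
  apply (simp_all add: in_measure)
  done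

declare cc.simps[simp del]

lemma cc_0[simp]: "cc 0 = 0" by (subst cc.simps) simp
lemma cc_1[simp]: "cc (Suc 0) = 1/2" by (subst cc.simps) simp

lemma cc_nonneg: "cc n \<ge> 0"
proof (induction n rule: less_induct)
  case (less n)
  show ?case
    by (subst cc.simps) (auto intro!: sum_nonneg mult_nonneg_nonneg less)
qed

lemma cc_conv: "(\<Sum>i\<le>n. cc i * cc (n - i)) = 2 * cc n - (if n = 1 then 1 else 0)"
proof -
  consider "n = 0" | "n = 1" | "n \<ge> 2" by linarith
  then show ?thesis
  proof cases
    case 1 then show ?thesis by simp
  next
    case 2 then show ?thesis by (simp add: atMost_Suc)
  next
    case 3
    have "{..n} = insert 0 (insert n {1..<n})" using 3 by auto
    then have "(\<Sum>i\<le>n. cc i * cc (n - i)) = (\<Sum>i\<in>{1..<n}. cc i * cc (n - i))"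
      using 3 by simp
    also have "\<dots> = 2 * cc n" using 3 by (subst (2) cc.simps) simp
    finally show ?thesis using 3 by simp
  qed
qed

lemma cc_partial_le: "(\<Sum>n<N. cc n) \<le> 1"
proof (induction N rule: less_induct)
  case (less N)
  have "(\<Sum>k<N. \<Sum>i\<le>k. cc i * cc (k - i)) = (\<Sum>(i,j)\<in>{(i,j). i+j < N}. cc i * cc j)"
    by (rule sum.triangle_reindex[symmetric])
  also have "{(i,j). i+j < N} = Sigma {..<N} (\<lambda>i. {..<N - i})" by auto
  also have "(\<Sum>(i,j)\<in>Sigma {..<N} (\<lambda>i. {..<N - i}). cc i * cc j) = (\<Sum>i<N. cc i * (\<Sum>j<N - i. cc j))"
    by (simp add: sum.Sigma[symmetric] sum_distrib_left)
  also have "\<dots> \<le> (\<Sum>i<N. cc i * 1)"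
  proof (rule sum_mono)
    fix i assume "i \<in> {..<N}"
    show "cc i * (\<Sum>j<N - i. cc j) \<le> cc i * 1"
    proof (cases "i = 0")
      case False
      then have "N - i < N" using \<open>i \<in> {..<N}\<close> by auto
      then show ?thesis using less cc_nonneg[of i] by (intro mult_left_mono) auto
    qed simp
  qed
  finally have A: "(\<Sum>k<N. \<Sum>i\<le>k. cc i * cc (k - i)) \<le> (\<Sum>n<N. cc n)" by simp
  have "(\<Sum>k<N. \<Sum>i\<le>k. cc i * cc (k - i)) = (\<Sum>k<N. 2 * cc k) - (\<Sum>k<N. (if k = 1 then 1 else 0))"
    by (simp add: cc_conv sum_subtractf)
  also have "(\<Sum>k<N. (if k = (1::nat) then 1 else 0::real)) = (if 1 < N then 1 else 0)"
    by (simp add: sum.delta)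
  finally show ?case using A by (simp add: sum_distrib_left[symmetric]) (smt (verit))
qed

lemma cc_finite_le: "finite F \<Longrightarrow> sum cc F \<le> 1"
proof -
  assume F: "finite F"
  have "F \<subseteq> {..<Suc (Max (insert 0 F))}" using F by (auto simp: less_Suc_eq_le)
  then have "sum cc F \<le> sum cc {..<Suc (Max (insert 0 F))}"
    by (intro sum_mono2) (auto simp: cc_nonneg)
  also have "\<dots> \<le> 1" by (rule cc_partial_le)
  finally show ?thesis .
qed

lemma cc_summable: "cc summable_on UNIV"
  by (rule nonneg_bdd_above_summable_on) (auto simp: cc_nonneg intro!: bdd_aboveI[of _ 1] cc_finite_le)

lemma cc_infsum_le: "infsum cc UNIV \<le> 1"
  by (rule infsum_le_finite_sums[OF cc_summable]) (simp add: cc_finite_le)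

lemma cc_infsum_nonneg: "infsum cc UNIV \<ge> 0"
  by (rule infsum_nonneg) (simp add: cc_nonneg)


lemma scaleR_scaleC_commute: "r *\<^sub>R (a *\<^sub>C (v::'a::complex_vector)) = a *\<^sub>C (r *\<^sub>R v)"
  by (simp only: scaleR_scaleC scaleC_scaleC mult.commute)

lemma bounded_linear_scaleC: "bounded_linear (\<lambda>v::'a::complex_normed_vector. a *\<^sub>C v)"
  by (rule bounded_linear_intro[of _ "cmod a"])
     (auto simp: scaleC_add_right scaleR_scaleC_commute norm_scaleC mult.commute)

lemma funpow_0_id: "(f::'a\<Rightarrow>'a) ^^ 0 = id" by (rule ext) simp
lemma funpow_Suc_comp: "(f::'a\<Rightarrow>'a) ^^ Suc n = f \<circ> f ^^ n" by (rule ext) simp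

lemma clinear_funpow: "clinear (f::'a::complex_vector\<Rightarrow>'a) \<Longrightarrow> clinear (f ^^ n)"
  by (induction n) (simp_all only: funpow_0_id funpow_Suc_comp clinear_id clinear_compose)

lemma bclinear_funpow: "bounded_clinear (f::'a::complex_normed_vector\<Rightarrow>'a) \<Longrightarrow> bounded_clinear (f ^^ n)"
  by (induction n) (simp_all only: funpow_0_id funpow_Suc_comp bclinear_id bclinear_compose)

definition Aop :: "real \<Rightarrow> ('a::chilbert \<Rightarrow> 'a) \<Rightarrow> 'a \<Rightarrow> 'a" where
  "Aop c P x = x - (1/c) *\<^sub>R P x"
definition Bop :: "real \<Rightarrow> ('a::chilbert \<Rightarrow> 'a) \<Rightarrow> 'a \<Rightarrow> 'a" where
  "Bop c P x = infsum (\<lambda>n. cc n *\<^sub>R (Aop c P ^^ n) x) UNIV"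
definition Sq :: "real \<Rightarrow> ('a::chilbert \<Rightarrow> 'a) \<Rightarrow> 'a \<Rightarrow> 'a" where
  "Sq c P x = sqrt c *\<^sub>R (x - Bop c P x)"

locale sqop =
  fixes P :: "'a::chilbert \<Rightarrow> 'a" and c :: real
  assumes Ppos: "op_pos P" and c0: "c > 0" and Pb: "\<And>x. norm (P x) \<le> c * norm x"
begin

abbreviation "A \<equiv> Aop c P"
abbreviation "B \<equiv> Bop c P"
abbreviation "Q \<equiv> Sq c P"

lemma Pcl: "clinear P" using Ppos by (simp add: op_pos_def bounded_clinear_def)

lemma A_cl: "clinear A"
  unfolding clinear_def Aop_def
  by (auto simp: clinear_add[OF Pcl] clinear_scaleC[OF Pcl] scaleC_diff_right scaleR_scaleC_commute
      scaleR_add_right)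

lemma A_bcl: "bounded_clinear A"
proof -
  have "norm (A x) \<le> norm x * 2" for x
  proof -
    have "norm (A x) \<le> norm x + norm ((1/c) *\<^sub>R P x)" unfolding Aop_def by (rule norm_triangle_ineq4)
    also have "norm ((1/c) *\<^sub>R P x) = (1/c) * norm (P x)" using c0 by simp
    also have "\<dots> \<le> (1/c) * (c * norm x)" using Pb c0 by (intro mult_left_mono) auto
    also have "\<dots> = norm x" using c0 by simp
    finally show ?thesis by simp
  qed
  then show ?thesis using A_cl unfolding bounded_clinear_def by blast
qed

lemma A_form: "cinner x (A x) = cinner x x - complex_of_real (1/c) * cinner x (P x)"
  unfolding Aop_def by (simp add: cinner_diff_right cinner_scaleR_right)

lemma P_form: "Im (cinner x (P x)) = 0" "0 \<le> Re (cinner x (P x))" "Re (cinner x (P x)) \<le> c * (norm x)\<^sup>2"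
proof -
  show "Im (cinner x (P x)) = 0" "0 \<le> Re (cinner x (P x))"
    using Ppos unfolding op_pos_def cnonneg_def by auto
  have "Re (cinner x (P x)) \<le> cmod (cinner x (P x))" by (rule complex_Re_le_cmod)
  also have "\<dots> \<le> norm x * norm (P x)" by (rule cinner_CS)
  also have "\<dots> \<le> norm x * (c * norm x)" by (intro mult_left_mono Pb) simp
  finally show "Re (cinner x (P x)) \<le> c * (norm x)\<^sup>2" by (simp add: power2_eq_square mult_ac)
qed

lemma A_form_Re: "Re (cinner x (A x)) = (norm x)\<^sup>2 - (1/c) * Re (cinner x (P x))"
  by (simp add: A_form Re_cinner_self)

lemma A_form_Im: "Im (cinner x (A x)) = 0"
  using P_form(1)[of x] by (simp add: A_form cinner_self_Im)

lemma A_nonneg: "cnonneg (cinner x (A x))"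
proof -
  have "(1/c) * Re (cinner x (P x)) \<le> (1/c) * (c * (norm x)\<^sup>2)"
    using P_form(3)[of x] c0 by (intro mult_left_mono) auto
  then show ?thesis using c0 unfolding cnonneg_def by (simp add: A_form_Re A_form_Im)
qed

lemma A_le: "Re (cinner x (A x)) \<le> (norm x)\<^sup>2"
  using P_form(2)[of x] c0 by (simp add: A_form_Re)

lemma A_herm: "cinner x (A y) = cinner (A x) y"
proof -
  have "cinner x (A y) = cnj (cinner y (A x))"
    by (rule hermitian_of_real_form[OF A_cl A_form_Im])
  then show ?thesis using cinner_commute[of "A x" y] by simp
qed

lemma A_norm: "norm (A y) \<le> norm y"
proof -
  have "(cmod (cinner (A y) (A y)))\<^sup>2 \<le> Re (cinner (A y) (A (A y))) * Re (cinner y (A y))"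
    by (rule pos_CS[OF A_cl A_nonneg])
  also have "\<dots> \<le> (norm (A y))\<^sup>2 * (norm y)\<^sup>2"
    using A_le[of "A y"] A_le[of y] A_nonneg[of "A y"] A_nonneg[of y] unfolding cnonneg_def
    by (intro mult_mono) auto
  moreover have "cmod (cinner (A y) (A y)) = (norm (A y))\<^sup>2"
    by (simp only: cinner_self_norm norm_of_real) simp
  ultimately have h: "(norm (A y))\<^sup>2 * (norm (A y))\<^sup>2 \<le> (norm (A y))\<^sup>2 * (norm y)\<^sup>2"
    by (simp add: power2_eq_square)
  show ?thesis
  proof (cases "norm (A y) = 0")
    case True then show ?thesis by simp
  next
    case False
    then have "(norm (A y))\<^sup>2 > 0" by simp
    with h have "(norm (A y))\<^sup>2 \<le> (norm y)\<^sup>2"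
      using mult_le_cancel_left_pos[of "(norm (A y))\<^sup>2" "(norm (A y))\<^sup>2" "(norm y)\<^sup>2"] by blast
    then show ?thesis by (rule power2_le_imp_le) simp
  qed
qed

lemma An_bcl: "bounded_clinear (A ^^ n)" by (rule bclinear_funpow[OF A_bcl])
lemma An_cl: "clinear (A ^^ n)" by (rule clinear_funpow[OF A_cl])
lemma An_bl: "bounded_linear (A ^^ n)" by (rule bclinear_bounded_linear[OF An_bcl])

lemma An_norm: "norm ((A ^^ n) x) \<le> norm x"
  by (induction n) (auto intro: order.trans[OF A_norm])

lemma An_herm: "cinner x ((A ^^ n) y) = cinner ((A ^^ n) x) y"
proof (induction n arbitrary: x y)
  case (Suc n)
  have "cinner x ((A ^^ Suc n) y) = cinner x (A ((A ^^ n) y))" by simp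
  also have "\<dots> = cinner (A x) ((A ^^ n) y)" by (rule A_herm)
  also have "\<dots> = cinner ((A ^^ n) (A x)) y" by (rule Suc)
  also have "(A ^^ n) (A x) = (A ^^ Suc n) x" by (simp add: funpow_swap1)
  finally show ?case .
qed simp

lemma An_Im: "Im (cinner x ((A ^^ n) x)) = 0"
proof -
  have "cinner x ((A ^^ n) x) = cnj (cinner x ((A ^^ n) x))"
    using An_herm[of x n x] cinner_commute[of "(A ^^ n) x" x] by simp
  then have "Im (cinner x ((A ^^ n) x)) = Im (cnj (cinner x ((A ^^ n) x)))" by (rule arg_cong)
  then show ?thesis by simp
qed

lemma term_abs_summable: "(\<lambda>n. norm (cc n *\<^sub>R (A ^^ n) x)) summable_on UNIV"
proof (rule Infinite_Sum.abs_summable_on_comparison_test')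
  show "(\<lambda>n. cc n * norm x) summable_on UNIV"
    by (rule summable_on_cmult_left[OF cc_summable])
  show "norm (cc n *\<^sub>R (A ^^ n) x) \<le> cc n * norm x" for n
    using cc_nonneg[of n] An_norm[of n x] by (simp add: mult_left_mono)
qed

lemma B_has_sum: "((\<lambda>n. cc n *\<^sub>R (A ^^ n) x) has_sum B x) UNIV"
  unfolding Bop_def using Infinite_Sum.abs_summable_summable[OF term_abs_summable] by (rule has_sum_infsum)

lemma B_add: "B (x + y) = B x + B y"
proof -
  have "((\<lambda>n. cc n *\<^sub>R (A ^^ n) x + cc n *\<^sub>R (A ^^ n) y) has_sum (B x + B y)) UNIV"
    by (intro has_sum_add B_has_sum)
  then have "((\<lambda>n. cc n *\<^sub>R (A ^^ n) (x + y)) has_sum (B x + B y)) UNIV"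
    by (simp add: clinear_add[OF An_cl] scaleR_add_right)
  then show ?thesis using B_has_sum[of "x + y"] by (rule has_sum_unique[rotated])
qed

lemma B_scaleC: "B (a *\<^sub>C x) = a *\<^sub>C B x"
proof -
  have "((\<lambda>n. a *\<^sub>C (cc n *\<^sub>R (A ^^ n) x)) has_sum (a *\<^sub>C B x)) UNIV"
    by (rule has_sum_bounded_linear[OF bounded_linear_scaleC B_has_sum])
  then have "((\<lambda>n. cc n *\<^sub>R (A ^^ n) (a *\<^sub>C x)) has_sum (a *\<^sub>C B x)) UNIV"
    by (simp add: clinear_scaleC[OF An_cl] scaleR_scaleC_commute)
  then show ?thesis using B_has_sum[of "a *\<^sub>C x"] by (rule has_sum_unique[rotated])
qed

lemma B_cl: "clinear B" unfolding clinear_def by (simp add: B_add B_scaleC)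

lemma B_diff: "B (x - y) = B x - B y" by (rule clinear_diff[OF B_cl])
lemma B_scaleR: "B (r *\<^sub>R x) = r *\<^sub>R B x" by (rule clinear_scaleR[OF B_cl])

lemma B_norm: "norm (B x) \<le> norm x"
proof -
  have "norm (B x) \<le> infsum (\<lambda>n. norm (cc n *\<^sub>R (A ^^ n) x)) UNIV"
    unfolding Bop_def by (rule norm_infsum_bound[OF term_abs_summable])
  also have "\<dots> \<le> infsum (\<lambda>n. cc n * norm x) UNIV"
  proof (rule infsum_mono)
    show "(\<lambda>n. norm (cc n *\<^sub>R (A ^^ n) x)) summable_on UNIV" by (rule term_abs_summable)
    show "(\<lambda>n. cc n * norm x) summable_on UNIV" by (rule summable_on_cmult_left[OF cc_summable])
    show "norm (cc n *\<^sub>R (A ^^ n) x) \<le> cc n * norm x" for n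
      using cc_nonneg[of n] An_norm[of n x] by (simp add: mult_left_mono)
  qed
  also have "\<dots> = infsum cc UNIV * norm x" by (rule infsum_cmult_left) (simp add: cc_summable)
  also have "\<dots> \<le> 1 * norm x" by (intro mult_right_mono cc_infsum_le) simp
  finally show ?thesis by simp
qed

lemma B_bcl: "bounded_clinear B"
  unfolding bounded_clinear_def using B_cl B_norm by (auto intro: exI[of _ 1])

lemma B_form: "Im (cinner x (B x)) = 0" "Re (cinner x (B x)) \<le> (norm x)\<^sup>2"
proof -
  have h: "((\<lambda>n. cinner x (cc n *\<^sub>R (A ^^ n) x)) has_sum cinner x (B x)) UNIV"
    by (rule has_sum_bounded_linear[OF bounded_linear_cinner_right B_has_sum])
  have hIm: "((\<lambda>n. Im (cinner x (cc n *\<^sub>R (A ^^ n) x))) has_sum Im (cinner x (B x))) UNIV"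
    by (rule has_sum_bounded_linear[OF bounded_linear_Im h])
  have "((\<lambda>n. Im (cinner x (cc n *\<^sub>R (A ^^ n) x))) has_sum 0) UNIV"
    by (rule has_sum_0) (simp add: cinner_scaleR_right An_Im)
  from hIm this show "Im (cinner x (B x)) = 0" by (rule has_sum_unique)
  have hRe: "((\<lambda>n. Re (cinner x (cc n *\<^sub>R (A ^^ n) x))) has_sum Re (cinner x (B x))) UNIV"
    by (rule has_sum_bounded_linear[OF bounded_linear_Re h])
  have g: "((\<lambda>n. cc n * (norm x)\<^sup>2) has_sum (infsum cc UNIV * (norm x)\<^sup>2)) UNIV"
    by (rule has_sum_cmult_left) (simp add: cc_summable)
  have "Re (cinner x (B x)) \<le> infsum cc UNIV * (norm x)\<^sup>2"
  proof (rule has_sum_mono[OF hRe g])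
    fix n :: nat
    have "Re (cinner x ((A ^^ n) x)) \<le> cmod (cinner x ((A ^^ n) x))" by (rule complex_Re_le_cmod)
    also have "\<dots> \<le> norm x * norm ((A ^^ n) x)" by (rule cinner_CS)
    also have "\<dots> \<le> norm x * norm x" by (intro mult_left_mono An_norm) simp
    finally have "Re (cinner x ((A ^^ n) x)) \<le> (norm x)\<^sup>2" by (simp add: power2_eq_square)
    then show "Re (cinner x (cc n *\<^sub>R (A ^^ n) x)) \<le> cc n * (norm x)\<^sup>2"
      using cc_nonneg[of n] by (simp add: cinner_scaleR_right mult_left_mono)
  qed
  also have "\<dots> \<le> 1 * (norm x)\<^sup>2" by (intro mult_right_mono cc_infsum_le) simp
  finally show "Re (cinner x (B x)) \<le> (norm x)\<^sup>2" by simp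
qed

end


context sqop begin

lemma BB: "B (B x) = 2 *\<^sub>R B x - A x"
proof -
  define f where "f = (\<lambda>(i,j). (cc i * cc j) *\<^sub>R (A ^^ (i+j)) x)"
  have fnorm: "norm (f (i,j)) \<le> cc i * norm x * cc j" for i j
  proof -
    have "norm (f (i,j)) = cc i * cc j * norm ((A ^^ (i+j)) x)"
      unfolding f_def using cc_nonneg[of i] cc_nonneg[of j] by (simp add: abs_mult)
    also have "\<dots> \<le> cc i * cc j * norm x"
      using cc_nonneg[of i] cc_nonneg[of j] An_norm[of "i+j" x] by (intro mult_left_mono) auto
    finally show ?thesis by (simp add: mult_ac)
  qed
  have row_abs: "(\<lambda>j. norm (f (i,j))) summable_on UNIV" for i
    by (rule Infinite_Sum.abs_summable_on_comparison_test'[of "\<lambda>j. cc i * norm x * cc j"])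
       (auto intro: summable_on_cmult_right[OF cc_summable] fnorm)
  have rowsum_le: "infsum (\<lambda>j. norm (f (i,j))) UNIV \<le> cc i * norm x" for i
  proof -
    have "infsum (\<lambda>j. norm (f (i,j))) UNIV \<le> infsum (\<lambda>j. cc i * norm x * cc j) UNIV"
      by (rule infsum_mono[OF row_abs summable_on_cmult_right[OF cc_summable] fnorm])
    also have "\<dots> = cc i * norm x * infsum cc UNIV"
      by (rule infsum_cmult_right) (simp add: cc_summable)
    also have "\<dots> \<le> cc i * norm x * 1"
      using cc_nonneg[of i] by (intro mult_left_mono cc_infsum_le) auto
    finally show ?thesis by simp
  qed
  have col_abs: "(\<lambda>i. norm (infsum (\<lambda>j. norm (f (i,j))) UNIV)) summable_on UNIV"
  proof (rule Infinite_Sum.abs_summable_on_comparison_test'[of "\<lambda>i. cc i * norm x"])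
    show "(\<lambda>i. cc i * norm x) summable_on UNIV" by (rule summable_on_cmult_left[OF cc_summable])
    fix i
    have "infsum (\<lambda>j. norm (f (i,j))) UNIV \<ge> 0" by (rule infsum_nonneg) simp
    then show "norm (infsum (\<lambda>j. norm (f (i,j))) UNIV) \<le> cc i * norm x"
      using rowsum_le[of i] by simp
  qed
  have fabs: "(\<lambda>p. norm (f p)) summable_on (UNIV \<times> UNIV)"
    using Infinite_Sum.abs_summable_on_Sigma_iff[of f UNIV "\<lambda>_. UNIV"] row_abs col_abs by auto
  have fsum: "f summable_on (UNIV \<times> UNIV)" by (rule Infinite_Sum.abs_summable_summable[OF fabs])
  have row: "((\<lambda>j. f (i,j)) has_sum (cc i *\<^sub>R (A ^^ i) (B x))) UNIV" for i
  proof -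
    have bl: "bounded_linear (\<lambda>v. cc i *\<^sub>R (A ^^ i) v)"
      by (rule bounded_linear_compose[OF bounded_linear_scaleR_right An_bl])
    from has_sum_bounded_linear[OF bl B_has_sum[of x]]
    have "((\<lambda>j. cc i *\<^sub>R (A ^^ i) (cc j *\<^sub>R (A ^^ j) x)) has_sum cc i *\<^sub>R (A ^^ i) (B x)) UNIV" .
    moreover have "cc i *\<^sub>R (A ^^ i) (cc j *\<^sub>R (A ^^ j) x) = f (i,j)" for j
      unfolding f_def by (simp add: clinear_scaleR[OF An_cl] funpow_add)
    ultimately show ?thesis by simp
  qed
  have BBf: "B (B x) = infsum f (UNIV \<times> UNIV)"
  proof -
    have "infsum f (UNIV \<times> UNIV) = infsum (\<lambda>i. infsum (\<lambda>j. f (i,j)) UNIV) UNIV"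
      using infsum_Sigma_banach[OF fsum] by simp
    also have "\<dots> = infsum (\<lambda>i. cc i *\<^sub>R (A ^^ i) (B x)) UNIV"
      using row by (intro infsum_cong infsumI) auto
    also have "\<dots> = B (B x)" by (simp add: Bop_def)
    finally show ?thesis by simp
  qed
  define g where "g = (\<lambda>(n,i). f (i, n - i))"
  define S where "S = Sigma (UNIV::nat set) (\<lambda>n. {..n})"
  have reidx: "(g has_sum s) S \<longleftrightarrow> (f has_sum s) (UNIV \<times> UNIV)" for s
    unfolding S_def
    by (rule has_sum_reindex_bij_witness[where j="\<lambda>(n,i). (i, n - i)" and i="\<lambda>(a,b). (a+b, a)"])
       (auto simp: g_def)
  have gsum: "g summable_on S" using reidx fsum by (auto simp: summable_on_def)
  have "infsum g S = infsum f (UNIV \<times> UNIV)"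
    using reidx[of "infsum f (UNIV \<times> UNIV)"] fsum by (auto intro: infsumI)
  moreover have "infsum g S = infsum (\<lambda>n. infsum (\<lambda>i. g (n,i)) {..n}) UNIV"
    using infsum_Sigma_banach[OF gsum[unfolded S_def]] unfolding S_def by simp
  moreover have "infsum (\<lambda>i. g (n,i)) {..n} = (2 * cc n - (if n = 1 then 1 else 0)) *\<^sub>R (A ^^ n) x" for n
  proof -
    have "infsum (\<lambda>i. g (n,i)) {..n} = (\<Sum>i\<le>n. (cc i * cc (n - i)) *\<^sub>R (A ^^ n) x)"
      unfolding g_def f_def by (auto intro: sum.cong)
    also have "\<dots> = (\<Sum>i\<le>n. cc i * cc (n - i)) *\<^sub>R (A ^^ n) x" by (simp add: scaleR_sum_left)
    finally show ?thesis by (simp add: cc_conv)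
  qed
  ultimately have BB2: "B (B x) = infsum (\<lambda>n. (2 * cc n - (if n = 1 then 1 else 0)) *\<^sub>R (A ^^ n) x) UNIV"
    using BBf by simp
  have h1: "((\<lambda>n. 2 *\<^sub>R (cc n *\<^sub>R (A ^^ n) x)) has_sum 2 *\<^sub>R B x) UNIV"
    by (rule has_sum_scaleR[OF B_has_sum])
  have h2: "((\<lambda>n. (if n = 1 then 1 else 0) *\<^sub>R (A ^^ n) x) has_sum A x) UNIV"
  proof -
    have "((\<lambda>n. (if n = 1 then 1 else 0) *\<^sub>R (A ^^ n) x) has_sum
        (\<Sum>n\<in>{1}. (if n = 1 then 1 else 0) *\<^sub>R (A ^^ n) x)) {1}"
      by (rule has_sum_finite) simp
    then have "((\<lambda>n. (if n = 1 then 1 else 0) *\<^sub>R (A ^^ n) x) has_sum A x) {1}" by simp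
    then show ?thesis by (subst has_sum_cong_neutral[where T="{1}"]) auto
  qed
  have "((\<lambda>n. (2 * cc n - (if n = 1 then 1 else 0)) *\<^sub>R (A ^^ n) x) has_sum (2 *\<^sub>R B x - A x)) UNIV"
    using has_sum_diff'[OF h1 h2] by (simp add: scaleR_diff_left)
  then show ?thesis unfolding BB2 by (rule infsumI)
qed

lemma Q_eq: "Q x = sqrt c *\<^sub>R (x - B x)" by (simp add: Sq_def)

lemma Q_cl: "clinear Q"
  unfolding clinear_def Q_eq
  by (auto simp: B_add B_scaleC scaleC_diff_right scaleR_scaleC_commute algebra_simps)

lemma Q_bcl: "bounded_clinear Q"
proof -
  have "norm (Q x) \<le> norm x * (2 * sqrt c)" for x
  proof -
    have "norm (Q x) = sqrt c * norm (x - B x)" using c0 by (simp add: Q_eq)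
    also have "\<dots> \<le> sqrt c * (norm x + norm (B x))" using c0 by (intro mult_left_mono norm_triangle_ineq4) simp
    also have "\<dots> \<le> sqrt c * (norm x + norm x)" using c0 by (intro mult_left_mono add_left_mono B_norm) simp
    finally show ?thesis by (simp add: mult_ac)
  qed
  then show ?thesis using Q_cl unfolding bounded_clinear_def by blast
qed

lemma Q_pos: "op_pos Q"
proof -
  have "cnonneg (cinner x (Q x))" for x
  proof -
    have e: "cinner x (Q x) = complex_of_real (sqrt c) * (cinner x x - cinner x (B x))"
      by (simp add: Q_eq cinner_scaleR_right cinner_diff_right)
    show ?thesis unfolding cnonneg_def e using B_form[of x] c0
      by (simp add: cinner_self_Im Re_cinner_self)
  qed
  then show ?thesis using Q_bcl unfolding op_pos_def by blast
qed

lemma QQ: "Q (Q x) = P x"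
proof -
  have BQ: "B (Q x) = sqrt c *\<^sub>R (B x - B (B x))" by (simp add: Q_eq B_scaleR B_diff)
  have "Q (Q x) = (sqrt c * sqrt c) *\<^sub>R ((x - B x) - (B x - B (B x)))"
    by (simp add: Q_eq[of "Q x"] BQ) (simp add: Q_eq scaleR_diff_right)
  also have "sqrt c * sqrt c = c" using c0 by simp
  also have "(x - B x) - (B x - B (B x)) = (1/c) *\<^sub>R P x"
    by (simp add: BB Aop_def scaleR_2 algebra_simps)
  also have "c *\<^sub>R ((1/c) *\<^sub>R P x) = P x" using c0 by simp
  finally show ?thesis .
qed

end

lemma sq_intertwine:
  assumes s1: "sqop P1 c" and s2: "sqop P2 c" and Y: "bounded_clinear Y"
    and YP: "\<And>x. Y (P1 x) = P2 (Y x)"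
  shows "Y (Sq c P1 x) = Sq c P2 (Y x)"
proof -
  interpret s1: sqop P1 c by (rule s1)
  interpret s2: sqop P2 c by (rule s2)
  have Ycl: "clinear Y" using Y by (simp add: bounded_clinear_def)
  have YA: "Y (Aop c P1 z) = Aop c P2 (Y z)" for z
    unfolding Aop_def by (simp add: clinear_diff[OF Ycl] clinear_scaleR[OF Ycl] YP)
  have YAn: "Y ((Aop c P1 ^^ n) z) = (Aop c P2 ^^ n) (Y z)" for n z
    by (induction n) (simp_all add: YA)
  have "((\<lambda>n. Y (cc n *\<^sub>R (Aop c P1 ^^ n) x)) has_sum Y (Bop c P1 x)) UNIV"
    by (rule has_sum_bounded_linear[OF bclinear_bounded_linear[OF Y] s1.B_has_sum])
  then have "((\<lambda>n. cc n *\<^sub>R (Aop c P2 ^^ n) (Y x)) has_sum Y (Bop c P1 x)) UNIV"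
    by (simp add: clinear_scaleR[OF Ycl] YAn)
  then have YB: "Y (Bop c P1 x) = Bop c P2 (Y x)" using s2.B_has_sum[of "Y x"] by (rule has_sum_unique)
  show ?thesis unfolding Sq_def by (simp add: clinear_scaleR[OF Ycl] clinear_diff[OF Ycl] YB)
qed


context sqop begin

lemma sqrt_unique:
  assumes R: "op_pos R" and RR: "\<And>x. R (R x) = P x"
  shows "R y = Q y"
proof -
  have Rbcl: "bounded_clinear R" using R by (simp add: op_pos_def)
  have Rcl: "clinear R" using Rbcl by (simp add: bounded_clinear_def)
  have Qcl: "clinear Q" by (rule Q_cl)
  have RP: "R (P x) = P (R x)" for x
  proof -
    have "R (P x) = R (R (R x))" using RR[of x] by simp
    also have "\<dots> = P (R x)" by (rule RR)
    finally show ?thesis .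
  qed
  have RQ: "R (Q x) = Q (R x)" for x by (rule sq_intertwine[OF sqop_axioms sqop_axioms Rbcl RP])
  define D where "D z = R z - Q z" for z
  have Dcl: "clinear D" unfolding clinear_def D_def
    by (auto simp: clinear_add[OF Rcl] clinear_add[OF Qcl] clinear_scaleC[OF Rcl] clinear_scaleC[OF Qcl]
        scaleC_diff_right)
  have Dherm: "cinner u (D v) = cinner (D u) v" for u v
    unfolding D_def by (simp add: cinner_diff_right cinner_diff_left pos_herm[OF R] pos_herm[OF Q_pos])
  have M1pos: "cnonneg (cinner z (D (R (D z))))" for z
    using R unfolding op_pos_def by (simp add: Dherm)
  have M2pos: "cnonneg (cinner z (D (Q (D z))))" for z
    using Q_pos unfolding op_pos_def by (simp add: Dherm)
  have M1cl: "clinear (\<lambda>z. D (R (D z)))"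
    using clinear_compose[OF Dcl clinear_compose[OF Rcl Dcl]] by (simp add: comp_def)
  have M2cl: "clinear (\<lambda>z. D (Q (D z)))"
    using clinear_compose[OF Dcl clinear_compose[OF Qcl Dcl]] by (simp add: comp_def)
  have sum0: "D (R (D z)) + D (Q (D z)) = 0" for z
  proof -
    have "R (D z) + Q (D z) = 0" unfolding D_def
      by (simp add: clinear_diff[OF Rcl] clinear_diff[OF Qcl] RR QQ RQ)
    then have "D (R (D z) + Q (D z)) = 0" by (simp add: clinear_zero[OF Dcl])
    then show ?thesis by (simp add: clinear_add[OF Dcl])
  qed
  have Re0: "Re (cinner z (D (R (D z)))) = 0 \<and> Re (cinner z (D (Q (D z)))) = 0" for z
  proof -
    have h: "cinner z (D (R (D z))) + cinner z (D (Q (D z))) = 0"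
      using sum0[of z] by (simp add: cinner_add_right[symmetric])
    have "Re (cinner z (D (R (D z))) + cinner z (D (Q (D z)))) = 0"
      by (simp only: h zero_complex.sel)
    then have "Re (cinner z (D (R (D z)))) + Re (cinner z (D (Q (D z)))) = 0"
      by (simp only: plus_complex.sel)
    with M1pos[of z] M2pos[of z] show ?thesis by (auto simp: cnonneg_def)
  qed
  have M1z: "D (R (D v)) = 0" for v
    by (rule pos_zero_form[of "\<lambda>z. D (R (D z))", OF M1cl M1pos]) (use Re0 in auto)
  have M2z: "D (Q (D v)) = 0" for v
    by (rule pos_zero_form[of "\<lambda>z. D (Q (D z))", OF M2cl M2pos]) (use Re0 in auto)
  have DDD: "D (D (D v)) = 0" for v
  proof -
    have "D (D v) = R (D v) - Q (D v)" by (simp add: D_def)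
    then have "D (D (D v)) = D (R (D v)) - D (Q (D v))" by (simp add: clinear_diff[OF Dcl])
    then show ?thesis by (simp add: M1z M2z)
  qed
  have DD: "D (D v) = 0" for v
  proof -
    have "cinner (D (D v)) (D (D v)) = cinner (D v) (D (D (D v)))" by (simp add: Dherm)
    also have "\<dots> = 0" by (simp add: DDD)
    finally show ?thesis by (simp add: cinner_self_eq_0)
  qed
  have "cinner (D y) (D y) = cinner y (D (D y))" by (simp add: Dherm)
  also have "\<dots> = 0" by (simp add: DD)
  finally have "D y = 0" by (simp add: cinner_self_eq_0)
  then show ?thesis by (simp add: D_def)
qed

lemma op_sqrt_eq: "op_sqrt P = Q"
  unfolding op_sqrt_def
proof (rule the_equality)
  show "op_pos Q \<and> Q \<circ> Q = P" using Q_pos QQ by (auto simp: fun_eq_iff)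
  fix R assume "op_pos R \<and> R \<circ> R = P"
  then show "R = Q" using sqrt_unique[of R] by (auto simp: fun_eq_iff)
qed

end

lemma sqopI: "op_pos P \<Longrightarrow> (\<And>x. norm (P x) \<le> B * norm x) \<Longrightarrow> B \<le> c \<Longrightarrow> 0 < c \<Longrightarrow> sqop P c"
proof -
  assume P: "op_pos P" and b: "\<And>x. norm (P x) \<le> B * norm x" and Bc: "B \<le> c" and c: "0 < c"
  have "norm (P x) \<le> c * norm x" for x
    using b[of x] mult_right_mono[OF Bc norm_ge_zero[of x]] by linarith
  then show ?thesis unfolding sqop_def using P c by blast
qed

lemma pos_bound: "op_pos P \<Longrightarrow> \<exists>B>0. \<forall>x. norm (P x) \<le> B * norm x"
  by (rule bclinear_bound[OF pos_bcl])

lemma cnonneg_sum: "(\<And>i. i \<in> I \<Longrightarrow> cnonneg (f i)) \<Longrightarrow> cnonneg (sum f I)"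
  unfolding cnonneg_def by (simp add: Re_sum Im_sum sum_nonneg)

lemma cnonneg_cinner_self: "cnonneg (cinner (x::'a::chilbert) x)"
  by (simp add: cnonneg_def cinner_self_Im cinner_self_nonneg)

lemma cproj_self:
  assumes "k \<in> M" shows "cproj M (k::'a::chilbert) = k"
  unfolding cproj_def
proof (rule the_equality)
  show "k \<in> M \<and> (\<forall>u\<in>M. cinner u (k - k) = 0)" using assms by simp
  fix m assume m: "m \<in> M \<and> (\<forall>u\<in>M. cinner u (k - m) = 0)"
  then have "cinner k (k - m) = 0" "cinner m (k - m) = 0" using assms by auto
  then have "cinner (k - m) (k - m) = 0" by (simp add: cinner_diff_left)
  then show "m = k" by (simp add: cinner_self_eq_0)
qed

theorem lemma2p10:
  fixes rmul :: "'x::complex_vector \<Rightarrow> 'a::cstar_algebra \<Rightarrow> 'x"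
    and hinner :: "'x \<Rightarrow> 'x \<Rightarrow> 'a"
    and \<Phi> :: "'x \<Rightarrow> 'h::chilbert \<Rightarrow> 'k::chilbert"
    and \<phi> :: "'a \<Rightarrow> 'h \<Rightarrow> 'h"
    and \<pi>\<phi> :: "'a \<Rightarrow> 'hp::chilbert \<Rightarrow> 'hp"
    and V :: "'h \<Rightarrow> 'hp"
    and K\<Phi> :: "'k set"
    and \<pi>\<Phi> :: "'x \<Rightarrow> 'hp \<Rightarrow> 'k"
    and T :: "'hp \<Rightarrow> 'hp"
    and S :: "'k \<Rightarrow> 'k"
  assumes "hilbert_module rmul hinner"
    and "full_module hinner"
    and "cp_module_map_with hinner \<Phi> \<phi>"
    and "stinespring_construction rmul hinner \<Phi> \<phi> \<pi>\<phi> V K\<Phi> \<pi>\<Phi>"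
    and "op_pos T"
    and "op_pos S"
    and "\<forall>k. S k = cproj K\<Phi> (S (cproj K\<Phi> k))"
    and "\<forall>x. \<pi>\<Phi> x \<circ> T = S \<circ> \<pi>\<Phi> x"
    and "\<forall>x. cadj (\<pi>\<Phi> x) \<circ> S = T \<circ> cadj (\<pi>\<Phi> x)"
  shows "cp_module_map hinner (\<lambda>x. cproj K\<Phi> \<circ> op_sqrt S \<circ> \<pi>\<Phi> x \<circ> op_sqrt T \<circ> V)"
proof -
  note st = assms(4)[unfolded stinespring_construction_def min_stinespring_def]
  have srep: "star_rep \<pi>\<phi>" using st by blast
  have Vb: "bounded_clinear V" using st by blast
  have pib: "bounded_clinear (\<pi>\<Phi> x)" for x using st by blast
  have pirange: "\<pi>\<Phi> x k \<in> K\<Phi>" for x k using st by blast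
  have adjrel: "cadj (\<pi>\<Phi> x) (\<pi>\<Phi> y z) = \<pi>\<phi> (hinner x y) z" for x y z
    using st by (metis comp_apply)
  have Tpos: "op_pos T" and Spos: "op_pos S" using assms(5,6) .
  have Tb: "bounded_clinear T" using Tpos by (rule pos_bcl)
  have Tcl: "clinear T" using Tb by (simp add: bounded_clinear_def)
  obtain BT where BT: "BT > 0" "\<And>x. norm (T x) \<le> BT * norm x" using pos_bound[OF Tpos] by blast
  obtain BS where BS: "BS > 0" "\<And>x. norm (S x) \<le> BS * norm x" using pos_bound[OF Spos] by blast
  define c where "c = max BT BS"
  have sT: "sqop T c" by (rule sqopI[OF Tpos BT(2)]) (use BT BS in \<open>auto simp: c_def\<close>)
  have sS: "sqop S c" by (rule sqopI[OF Spos BS(2)]) (use BT BS in \<open>auto simp: c_def\<close>)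
  interpret sT: sqop T c by (rule sT)
  interpret sS: sqop S c by (rule sS)
  have inter: "\<pi>\<Phi> x (Sq c T h) = Sq c S (\<pi>\<Phi> x h)" for x h
  proof (rule sq_intertwine[OF sT sS pib])
    show "\<pi>\<Phi> x (T z) = S (\<pi>\<Phi> x z)" for z using assms(8) by (metis comp_apply)
  qed
  define \<Psi> where "\<Psi> x = \<pi>\<Phi> x \<circ> T \<circ> V" for x
  have eq\<Psi>: "(\<lambda>x. cproj K\<Phi> \<circ> op_sqrt S \<circ> \<pi>\<Phi> x \<circ> op_sqrt T \<circ> V) = \<Psi>"
  proof (intro ext)
    fix x h
    have "(cproj K\<Phi> \<circ> op_sqrt S \<circ> \<pi>\<Phi> x \<circ> op_sqrt T \<circ> V) h
        = cproj K\<Phi> (Sq c S (\<pi>\<Phi> x (Sq c T (V h))))"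
      by (simp add: sT.op_sqrt_eq sS.op_sqrt_eq)
    also have "\<dots> = cproj K\<Phi> (\<pi>\<Phi> x (Sq c T (Sq c T (V h))))" by (simp add: inter)
    also have "\<dots> = cproj K\<Phi> (\<pi>\<Phi> x (T (V h)))" by (simp add: sT.QQ)
    also have "\<dots> = \<pi>\<Phi> x (T (V h))" by (rule cproj_self[OF pirange])
    finally show "(cproj K\<Phi> \<circ> op_sqrt S \<circ> \<pi>\<Phi> x \<circ> op_sqrt T \<circ> V) h = \<Psi> x h"
      by (simp add: \<Psi>_def)
  qed
  define \<phi>' where "\<phi>' a = cadj V \<circ> T \<circ> \<pi>\<phi> a \<circ> T \<circ> V" for a
  have cVb: "bounded_clinear (cadj V)" by (rule adj_bclinear[OF Vb])
  have cVcl: "clinear (cadj V)" using cVb by (simp add: bounded_clinear_def)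
  have pphi_b: "bounded_clinear (\<pi>\<phi> a)" for a using srep by (simp add: star_rep_def)
  have pphi_lin: "clinear (\<lambda>a. \<pi>\<phi> a h)" for h using srep by (simp add: star_rep_def)
  have pphi_mult: "\<pi>\<phi> (a * b) = \<pi>\<phi> a \<circ> \<pi>\<phi> b" for a b using srep by (simp add: star_rep_def)
  have pphi_star: "\<pi>\<phi> (cstar a) = cadj (\<pi>\<phi> a)" for a using srep by (simp add: star_rep_def)
  have \<Psi>b: "bounded_clinear (\<Psi> x)" for x
    unfolding \<Psi>_def by (intro bclinear_compose pib Tb Vb)
  have adj\<Psi>: "cadj (\<Psi> x) = cadj V \<circ> T \<circ> cadj (\<pi>\<Phi> x)" for x
  proof (rule adj_unique)
    show "has_adj (\<Psi> x) (cadj V \<circ> T \<circ> cadj (\<pi>\<Phi> x))"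
      unfolding has_adj_def \<Psi>_def
      by (simp add: adj_apply[OF pib] adj_apply[OF Vb, symmetric] pos_herm[OF Tpos])
  qed
  have rel: "cadj (\<Psi> x) \<circ> \<Psi> y = \<phi>' (hinner x y)" for x y
    apply (simp only: adj\<Psi>)
    by (simp add: \<Psi>_def \<phi>'_def fun_eq_iff adjrel)
  have cp: "cp_map \<phi>'"
    unfolding cp_map_def
  proof (intro conjI allI impI)
    fix h
    have "clinear ((cadj V \<circ> T) \<circ> (\<lambda>a. \<pi>\<phi> a (T (V h))))"
      by (intro clinear_compose cVcl Tcl pphi_lin)
    then show "clinear (\<lambda>a. \<phi>' a h)" by (simp add: \<phi>'_def comp_def)
  next
    fix a show "bounded_clinear (\<phi>' a)"
      unfolding \<phi>'_def by (intro bclinear_compose cVb Tb pphi_b Vb)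
  next
    fix n and M :: "nat \<Rightarrow> nat \<Rightarrow> 'a" and h :: "nat \<Rightarrow> 'h"
    assume "mat_pos n M"
    then obtain Bm where Bm: "\<And>i j. i < n \<Longrightarrow> j < n \<Longrightarrow> M i j = (\<Sum>k<n. cstar (Bm k i) * Bm k j)"
      unfolding mat_pos_def by blast
    define g where "g j = T (V (h j))" for j
    define u where "u k = (\<Sum>i<n. \<pi>\<phi> (Bm k i) (g i))" for k
    have trm: "cinner (h i) (\<phi>' (M i j) (h j)) =
        (\<Sum>k<n. cinner (\<pi>\<phi> (Bm k i) (g i)) (\<pi>\<phi> (Bm k j) (g j)))" if "i < n" "j < n" for i j
    proof -
      have "cinner (h i) (\<phi>' (M i j) (h j)) = cinner (g i) (\<pi>\<phi> (M i j) (g j))"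
        unfolding \<phi>'_def g_def by (simp add: adj_apply[OF Vb, symmetric] pos_herm[OF Tpos])
      also have "\<pi>\<phi> (M i j) (g j) = (\<Sum>k<n. \<pi>\<phi> (cstar (Bm k i) * Bm k j) (g j))"
        using Bm[OF that] clinear_sum[OF pphi_lin[of "g j"]] by simp
      also have "\<dots> = (\<Sum>k<n. cadj (\<pi>\<phi> (Bm k i)) (\<pi>\<phi> (Bm k j) (g j)))"
        by (simp add: pphi_mult pphi_star)
      also have "cinner (g i) \<dots> = (\<Sum>k<n. cinner (\<pi>\<phi> (Bm k i) (g i)) (\<pi>\<phi> (Bm k j) (g j)))"
        by (simp add: cinner_sum_right adj_apply[OF pphi_b, symmetric])
      finally show ?thesis .
    qed
    have "(\<Sum>i<n. \<Sum>j<n. cinner (h i) (\<phi>' (M i j) (h j))) =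
        (\<Sum>i<n. \<Sum>j<n. \<Sum>k<n. cinner (\<pi>\<phi> (Bm k i) (g i)) (\<pi>\<phi> (Bm k j) (g j)))"
      by (intro sum.cong refl) (simp add: trm)
    also have "\<dots> = (\<Sum>i<n. \<Sum>k<n. \<Sum>j<n. cinner (\<pi>\<phi> (Bm k i) (g i)) (\<pi>\<phi> (Bm k j) (g j)))"
      by (rule sum.cong[OF refl], rule sum.swap)
    also have "\<dots> = (\<Sum>k<n. \<Sum>i<n. \<Sum>j<n. cinner (\<pi>\<phi> (Bm k i) (g i)) (\<pi>\<phi> (Bm k j) (g j)))"
      by (rule sum.swap)
    also have "\<dots> = (\<Sum>k<n. cinner (u k) (u k))"
      unfolding u_def cinner_sum_left cinner_sum_right by (rule sum.cong[OF refl], rule sum.swap)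
    finally show "cnonneg (\<Sum>i<n. \<Sum>j<n. cinner (h i) (\<phi>' (M i j) (h j)))"
      by (simp add: cnonneg_sum cnonneg_cinner_self)
  qed
  show ?thesis unfolding eq\<Psi> cp_module_map_def cp_module_map_with_def
    using \<Psi>b cp rel by blast
qed


end
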